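(* Consider the problem and algorithm AC2CD described in the context (including the additional requirement on $A^{k,i}$). For every stationary point $x^*$ and every inner iteration $(k,i)$, \[ g^{k,i}\bigl(x^*_{p^k_i}-z^{k,i+1}_{p^k_i}\bigr)\le \max\Bigl\{\frac1{A_l},\frac{L^{\max}}{2\delta(1-\gamma)}\Bigr\}\,\bigl|z^{k,i+1}_{p^k_i}-z^{k,i}_{p^k_i}\bigr|\,\bigl|x^*_{p^k_i}-z^{k,i+1}_{p^k_i}\bigr|. \]
   Context: Problem: minimize $f(x)$ subject to $e^T x = b$ and $l_i \le x_i \le u_i$ ($i=1,\dots,n$), where $n\ge 2$, $e$ is the all-ones vector, $b\in\mathbb{R}$, $l_i\in\mathbb{R}\cup\{-\infty\}$, $u_i\in\mathbb{R}\cup\{+\infty\}$, $l_i<u_i$, and $f:\mathbb{R}^n\to\mathbb{R}$ is continuously differentiable with $\nabla f$ Lipschitz continuous on $\mathbb{R}^n$. $\mathcal F$ is the feasible set, $e_i$ the $i$th unit vector. For $i\ne j$, $L_{i,j}>0$ are fixed constants such that for every $x\in\mathbb{R}^n$ and $s,t\in\mathbb{R}$, $|\nabla f(x+s(e_i-e_j))^T(e_i-e_j)-\nabla f(x+t(e_i-e_j))^T(e_i-e_j)|\le L_{i,j}|s-t|$; $L_{i,i}=0$; $L^{\max}=\max_{i,j}L_{i,j}$. For $x\in\mathcal F$, $D_h(x)=\min\{x_h-l_h,u_h-x_h\}$. A point $x^*\in\mathcal F$ is stationary iff there is $\lambda^*\in\mathbb{R}$ with $\nabla_i f(x^* )\ge\lambda^*$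 if $x^*_i=l_i$, $=\lambda^*$ if $l_i<x^*_i<u_i$, $\le\lambda^*$ if $x^*_i=u_i$. Algorithm AC2CD with parameters $\tau\in(0,1]$, $\gamma,\delta\in(0,1)$, $0<A_l\le A_u<\infty$ and starting point $x^0\in\mathcal F$: for $k=0,1,2,\dots$: let $D^k=\max_h D_h(x^k)$; choose $j(k)$ with $D_{j(k)}(x^k)\ge\tau D^k$; choose a permutation $(p^k_1,\dots,p^k_n)$ of $\{1,\dots,n\}$; set $z^{k,1}=x^k$; for $i=1,\dots,n$ (inner iteration $(k,i)$): $g^{k,i}=\nabla_{j(k)}f(z^{k,i})-\nabla_{p^k_i}f(z^{k,i})$, $d^{k,i}=g^{k,i}(e_{p^k_i}-e_{j(k)})$; $\bar\alpha^{k,i}=\min\{u_{p^k_i}-z^{k,i}_{p^k_i},z^{k,i}_{j(k)}-l_{j(k)}\}/g^{k,i}$ if $g^{k,i}>0$, $=\min\{z^{k,i}_{p^k_i}-l_{p^k_i},u_{j(k)}-z^{k,i}_{j(k)}\}/|g^{k,i}|$ if $g^{k,i}<0$, $=0$ if $g^{k,i}=0$; choose $A^{k,i}\in[A_l,A_u]$, set $\Delta^{k,i}=\min\{\bar\alpha^{k,i},A^{k,i}\}$; starting from $\alpha=\Delta^{k,i}$, while $f(z^{k,i}+\alpha d^{k,i})>f(z^{k,i})+\gamma\alpha\nabla f(z^{k,i})^Td^{k,i}$ replace $\alpha$ by $\delta\alpha$; $\alpha^{k,i}$ is the final $\alpha$ and $z^{k,i+1}=z^{k,i}+\alpha^{k,i}d^{k,i}$.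 Then $x^{k+1}=z^{k,n+1}$. Additional requirement: the values $A^{k,i}\in[A_l,A_u]$ are chosen so that $l_{j(k)}<z^{k,i}_{j(k)}<u_{j(k)}$ for all $k\ge0$ and $i=1,\dots,n+1$. Standing assumptions: $\mathcal L_0=\{x\in\mathcal F: f(x)\le f(x^0)\}$ is nonempty and compact, and every $x\in\mathcal L_0$ has some index $i$ with $l_i<x_i<u_i$. *)

theory Defs
  imports "HOL-Analysis.Analysis"
begin

text \<open>Vectors of R^n are modelled as real^'n (index type 'n, n = CARD('n)).
  Bounds are extended reals: l i may be -\<infinity>, u i may be +\<infinity>.\<close>

definition feasible :: "('n::finite \<Rightarrow> ereal) \<Rightarrow> ('n \<Rightarrow> ereal) \<Rightarrow> real \<Rightarrow> real^'n \<Rightarrow> bool" where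
  "feasible l u b x \<longleftrightarrow> (\<Sum>i\<in>UNIV. x $ i) = b \<and> (\<forall>i. l i \<le> ereal (x $ i) \<and> ereal (x $ i) \<le> u i)"

definition Dh :: "('n::finite \<Rightarrow> ereal) \<Rightarrow> ('n \<Rightarrow> ereal) \<Rightarrow> real^'n \<Rightarrow> 'n \<Rightarrow> ereal" where
  "Dh l u x h = min (ereal (x $ h) - l h) (u h - ereal (x $ h))"

definition stationary :: "('n::finite \<Rightarrow> ereal) \<Rightarrow> ('n \<Rightarrow> ereal) \<Rightarrow> real \<Rightarrow> (real^'n \<Rightarrow> real^'n) \<Rightarrow> real^'n \<Rightarrow> bool" where
  "stationary l u b grad xs \<longleftrightarrow> feasible l u b xs \<and>
     (\<exists>lam::real. \<forall>i.
        (ereal (xs $ i) = l i \<longrightarrow> grad xs $ i \<ge> lam) \<and>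
        (l i < ereal (xs $ i) \<and> ereal (xs $ i) < u i \<longrightarrow> grad xs $ i = lam) \<and>
        (ereal (xs $ i) = u i \<longrightarrow> grad xs $ i \<le> lam))"

text \<open>Maximal feasible stepsize alpha-bar along d = g (e_p - e_j) from z.\<close>
definition alpha_bar :: "('n::finite \<Rightarrow> ereal) \<Rightarrow> ('n \<Rightarrow> ereal) \<Rightarrow> real^'n \<Rightarrow> 'n \<Rightarrow> 'n \<Rightarrow> real \<Rightarrow> ereal" where
  "alpha_bar l u z p j g =
     (if g > 0 then min (u p - ereal (z $ p)) (ereal (z $ j) - l j) / ereal g
      else if g < 0 then min (ereal (z $ p) - l p) (u j - ereal (z $ j)) / ereal \<bar>g\<bar>
      else 0)"

end

theory Submission
  imports Defs
begin



lemma line_deriv: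
  fixes f :: "real^'n::finite \<Rightarrow> real"
  assumes grad: "\<forall>y. (f has_derivative (\<lambda>h. grad y \<bullet> h)) (at y)"
  shows "((\<lambda>r. f (z + r *\<^sub>R d)) has_real_derivative (grad (z + r *\<^sub>R d) \<bullet> d)) (at r)"
proof -
  have h1: "((\<lambda>r. z + r *\<^sub>R d) has_derivative (\<lambda>h. h *\<^sub>R d)) (at r)"
    by (auto intro!: derivative_eq_intros)
  have "((\<lambda>r. f (z + r *\<^sub>R d)) has_derivative (\<lambda>h. grad (z + r *\<^sub>R d) \<bullet> (h *\<^sub>R d))) (at r)"
    using has_derivative_compose[OF h1 grad[rule_format]] by simp
  then show ?thesis
    by (simp add: has_field_derivative_def mult.commute[of _ "grad _ \<bullet> d"])
qed

lemma descent:
  fixes f :: "real^'n::finite \<Rightarrow> real"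
  assumes grad: "\<forall>y. (f has_derivative (\<lambda>h. grad y \<bullet> h)) (at y)"
    and lip: "\<And>r. r \<ge> 0 \<Longrightarrow> grad (z + r *\<^sub>R d) \<bullet> d - grad z \<bullet> d \<le> K * r"
    and t: "t \<ge> 0"
  shows "f (z + t *\<^sub>R d) \<le> f z + t * (grad z \<bullet> d) + K/2 * t^2"
proof -
  define \<psi> where "\<psi> r = f (z + r *\<^sub>R d) - r * (grad z \<bullet> d) - K/2 * r^2" for r
  have "\<psi> t \<le> \<psi> 0"
  proof (rule DERIV_nonpos_imp_nonincreasing[OF t])
    fix x :: real assume x: "0 \<le> x" "x \<le> t"
    have "DERIV \<psi> x :> (grad (z + x *\<^sub>R d) \<bullet> d - grad z \<bullet> d - K * x)"
      unfolding \<psi>_def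
      by (auto intro!: derivative_eq_intros line_deriv[OF grad])
    moreover have "grad (z + x *\<^sub>R d) \<bullet> d - grad z \<bullet> d - K * x \<le> 0" using lip[OF x(1)] by simp
    ultimately show "\<exists>y. DERIV \<psi> x :> y \<and> y \<le> 0" by blast
  qed
  then show ?thesis unfolding \<psi>_def by simp
qed

lemma stepE:
  fixes a b :: ereal
  assumes G: "G > 0" and A: "A > 0" and q: "0 < q" "q \<le> 1"
    and al: "\<alpha> = q * \<Delta>" and D: "\<Delta> = real_of_ereal (min (min a b / ereal G) (ereal A))"
    and ha: "ereal (\<alpha>*G) < a" and hb: "ereal (\<alpha>*G) < b"
  shows "\<Delta> > 0 \<and> (q = 1 \<longrightarrow> \<Delta> = A)"
proof -
  define c where "c = min a b"
  have hc: "ereal (\<alpha>*G) < c" using ha hb by (simp add: c_def)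
  show ?thesis
  proof (cases c)
    case (real r)
    have cg: "c / ereal G = ereal (r / G)" using real G by simp
    have D0: "\<Delta> = real_of_ereal (min (c / ereal G) (ereal A))" using D by (simp add: c_def)
    have D': "\<Delta> = min (r/G) A" unfolding D0 cg by (simp add: min_def)
    have rr: "\<alpha>*G < r" using hc real by simp
    have pos: "\<Delta> > 0"
    proof (rule ccontr)
      assume "\<not> \<Delta> > 0"
      then have "\<Delta> = r/G" "r \<le> 0" using D' A G by (auto simp: min_def divide_pos_pos split: if_splits, smt (verit) divide_pos_pos)
      then have "\<alpha>*G = q * r" using al G by simp
      also have "\<dots> \<ge> r" using \<open>r \<le> 0\<close> q by (simp add: mult_le_cancel_right1)
      finally show False using rr by simp
    qed
    moreover have "q = 1 \<longrightarrow> \<Delta> = A"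
    proof
      assume "q = 1"
      show "\<Delta> = A"
      proof (rule ccontr)
        assume "\<Delta> \<noteq> A"
        then have "\<Delta> = r/G" using D' by (auto simp: min_def split: if_splits)
        then have "\<alpha>*G = r" using al G \<open>q = 1\<close> by simp
        then show False using rr by simp
      qed
    qed
    ultimately show ?thesis by blast
  next
    case PInf
    have D0: "\<Delta> = real_of_ereal (min (c / ereal G) (ereal A))" using D by (simp add: c_def)
    then have "\<Delta> = A" using PInf G by simp
    then show ?thesis using A by simp
  next
    case MInf
    then show ?thesis using hc by simp
  qed
qed

lemma ereal_gap1:
  fixes u :: ereal
  assumes "ereal (x + y) < u"
  shows "ereal y < u - ereal x"
  using assms by (cases u) auto

lemma ereal_gap2:
  fixes l :: ereal
  assumes "l < ereal (x - y)"
  shows "ereal y < ereal x - l"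
  using assms by (cases l) auto


theorem lemma5:
  fixes f :: "real^'n \<Rightarrow> real" and grad :: "real^'n \<Rightarrow> real^'n"
    and l u :: "'n \<Rightarrow> ereal" and b :: real
    and Lc :: "'n \<Rightarrow> 'n \<Rightarrow> real"
    and \<tau> \<gamma> \<delta> Al Au :: real
    and x :: "nat \<Rightarrow> real^'n"
    and z :: "nat \<Rightarrow> nat \<Rightarrow> real^'n"
    and j :: "nat \<Rightarrow> 'n"
    and p :: "nat \<Rightarrow> nat \<Rightarrow> 'n"
    and A :: "nat \<Rightarrow> nat \<Rightarrow> real"
    and \<alpha> :: "nat \<Rightarrow> nat \<Rightarrow> real"
    and xs :: "real^'n" and k i :: nat
  defines "n \<equiv> CARD('n)"
  defines "Lmax \<equiv> Max (case_prod Lc ` UNIV)"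
  defines "g \<equiv> \<lambda>k i. grad (z k i) $ j k - grad (z k i) $ p k i"
  defines "d \<equiv> \<lambda>k i. g k i *\<^sub>R (axis (p k i) 1 - axis (j k) 1)"
  defines "\<Delta> \<equiv> \<lambda>k i. real_of_ereal (min (alpha_bar l u (z k i) (p k i) (j k) (g k i)) (ereal (A k i)))"
  defines "armijo \<equiv> \<lambda>k i a. f (z k i + a *\<^sub>R d k i) \<le> f (z k i) + \<gamma> * a * (grad (z k i) \<bullet> d k i)"
  \<comment> \<open>problem data\<close>
  assumes n_ge: "CARD('n) \<ge> 2"
    and l_fin: "\<forall>i. l i \<noteq> \<infinity>" and u_fin: "\<forall>i. u i \<noteq> -\<infinity>" and lu: "\<forall>i. l i < u i"
    and grad: "\<forall>y. (f has_derivative (\<lambda>h. grad y \<bullet> h)) (at y)"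
    and grad_lip: "\<exists>K. \<forall>y y'. dist (grad y) (grad y') \<le> K * dist y y'"
    and Lc_pos: "\<forall>i i'. i \<noteq> i' \<longrightarrow> Lc i i' > 0" and Lc_diag: "\<forall>i. Lc i i = 0"
    and Lc_lip: "\<forall>i i' y s t. i \<noteq> i' \<longrightarrow>
        \<bar>grad (y + s *\<^sub>R (axis i 1 - axis i' 1)) \<bullet> (axis i 1 - axis i' 1)
         - grad (y + t *\<^sub>R (axis i 1 - axis i' 1)) \<bullet> (axis i 1 - axis i' 1)\<bar> \<le> Lc i i' * \<bar>s - t\<bar>"
  \<comment> \<open>algorithm parameters\<close>
    and \<tau>: "0 < \<tau>" "\<tau> \<le> 1" and \<gamma>: "0 < \<gamma>" "\<gamma> < 1" and \<delta>: "0 < \<delta>" "\<delta> < 1"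
    and Al: "0 < Al" "Al \<le> Au"
  \<comment> \<open>standing assumptions\<close>
    and x0: "feasible l u b (x 0)"
    and L0: "compact {y. feasible l u b y \<and> f y \<le> f (x 0)}" "{y. feasible l u b y \<and> f y \<le> f (x 0)} \<noteq> {}"
    and L0_int: "\<forall>y. feasible l u b y \<and> f y \<le> f (x 0) \<longrightarrow> (\<exists>h. l h < ereal (y $ h) \<and> ereal (y $ h) < u h)"
  \<comment> \<open>the iterates of AC2CD\<close>
    and j_choice: "\<forall>k. Dh l u (x k) (j k) \<ge> ereal \<tau> * Max (range (Dh l u (x k)))"
    and p_perm: "\<forall>k. bij_betw (p k) {1..n} UNIV"
    and z_start: "\<forall>k. z k 1 = x k"
    and A_range: "\<forall>k i. 1 \<le> i \<and> i \<le> n \<longrightarrow> Al \<le> A k i \<and> A k i \<le> Au"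
    and linesearch: "\<forall>k i. 1 \<le> i \<and> i \<le> n \<longrightarrow>
        (\<exists>m::nat. \<alpha> k i = \<delta> ^ m * \<Delta> k i \<and> armijo k i (\<alpha> k i) \<and>
                  (\<forall>m'<m. \<not> armijo k i (\<delta> ^ m' * \<Delta> k i)))"
    and z_step: "\<forall>k i. 1 \<le> i \<and> i \<le> n \<longrightarrow> z k (Suc i) = z k i + \<alpha> k i *\<^sub>R d k i"
    and x_next: "\<forall>k. x (Suc k) = z k (n + 1)"
  \<comment> \<open>additional requirement on the A^{k,i}\<close>
    and j_interior: "\<forall>k i. 1 \<le> i \<and> i \<le> n + 1 \<longrightarrow>
        l (j k) < ereal (z k i $ j k) \<and> ereal (z k i $ j k) < u (j k)"
  \<comment> \<open>claim\<close>
    and xs: "stationary l u b grad xs"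
    and ki: "1 \<le> i" "i \<le> n"
  shows "g k i * (xs $ p k i - z k (Suc i) $ p k i)
         \<le> max (1 / Al) (Lmax / (2 * \<delta> * (1 - \<gamma>)))
            * \<bar>z k (Suc i) $ p k i - z k i $ p k i\<bar> * \<bar>xs $ p k i - z k (Suc i) $ p k i\<bar>"
proof -
  define P where "P = p k i"
  define J where "J = j k"
  define Z where "Z = z k i"
  define Z' where "Z' = z k (Suc i)"
  define G where "G = g k i"
  define C where "C = max (1 / Al) (Lmax / (2 * \<delta> * (1 - \<gamma>)))"
  have Cpos: "C > 0" using Al by (simp add: C_def less_max_iff_disj)
  have rhs_nn: "0 \<le> C * \<bar>Z' $ P - Z $ P\<bar> * \<bar>xs $ P - Z' $ P\<bar>"
    using Cpos by simp
  show ?thesis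
  proof (cases "G * (xs $ P - Z' $ P) \<le> 0")
    case True
    then show ?thesis using rhs_nn unfolding P_def Z_def Z'_def G_def C_def by linarith
  next
    case False
    then have Gne: "G \<noteq> 0" by auto
    have PJ: "P \<noteq> J"
    proof
      assume "P = J" then have "G = 0" by (simp add: G_def g_def P_def J_def)
      with Gne show False by simp
    qed
    have iin: "1 \<le> i \<and> i \<le> n" using ki by simp
    obtain m where m: "\<alpha> k i = \<delta> ^ m * \<Delta> k i" "armijo k i (\<alpha> k i)"
      "\<forall>m'<m. \<not> armijo k i (\<delta> ^ m' * \<Delta> k i)"
      using linesearch iin by blast
    define al where "al = \<alpha> k i"
    define v :: "real^'n" where "v = axis P 1 - axis J 1"
    have dkv: "d k i = G *\<^sub>R v" by (simp add: d_def G_def v_def P_def J_def)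
    have Zs: "Z' = Z + al *\<^sub>R d k i" using z_step iin by (simp add: Z'_def Z_def al_def)
    have ZP: "Z' $ P = Z $ P + al * G" using PJ by (simp add: Zs dkv v_def axis_def)
    have ZJ: "Z' $ J = Z $ J - al * G" using PJ by (simp add: Zs dkv v_def axis_def)
    have feas: "l P \<le> ereal (xs $ P)" "ereal (xs $ P) \<le> u P"
      using xs by (auto simp: stationary_def feasible_def)
    have jint1: "l J < ereal (Z $ J)" "ereal (Z $ J) < u J"
      using j_interior ki by (auto simp: Z_def J_def)
    have jint2: "l J < ereal (Z' $ J)" "ereal (Z' $ J) < u J"
      using j_interior ki by (auto simp: Z'_def J_def)
    have Ak: "Al \<le> A k i" "A k i \<le> Au" using A_range iin by auto
    have Apos: "A k i > 0" using Ak Al by simp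
    have q: "0 < \<delta> ^ m" "\<delta> ^ m \<le> 1" using \<delta> by (auto simp: power_le_one)
    have DeltaG: "\<Delta> k i = real_of_ereal (min (alpha_bar l u Z P J G) (ereal (A k i)))"
      by (simp add: \<Delta>_def Z_def P_def J_def G_def)
    have key: "\<Delta> k i > 0 \<and> (\<delta> ^ m = 1 \<longrightarrow> \<Delta> k i = A k i)"
    proof (cases "G > 0")
      case True
      then have ab: "alpha_bar l u Z P J G = min (u P - ereal (Z $ P)) (ereal (Z $ J) - l J) / ereal \<bar>G\<bar>"
        by (simp add: alpha_bar_def)
      have "0 < G * (xs $ P - Z' $ P)" using False by (simp add: not_le)
      then have "0 < xs $ P - Z' $ P" using True by (simp add: zero_less_mult_iff)
      then have "Z $ P + al * \<bar>G\<bar> < xs $ P" using ZP True by simp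
      then have "ereal (Z $ P + al * \<bar>G\<bar>) < ereal (xs $ P)" by simp
      then have h1: "ereal (Z $ P + al * \<bar>G\<bar>) < u P" using feas(2) by (rule less_le_trans)
      have h2: "l J < ereal (Z $ J - al * \<bar>G\<bar>)" using jint2 ZJ True by simp
      show ?thesis
        apply (rule stepE[of "\<bar>G\<bar>" "A k i" "\<delta>^m" "al" "\<Delta> k i" "u P - ereal (Z $ P)" "ereal (Z $ J) - l J"])
        using Gne apply simp
        apply (fact Apos) apply (fact q(1)) apply (fact q(2))
        apply (simp add: al_def m(1)) apply (simp add: DeltaG ab)
        apply (fact ereal_gap1[OF h1]) apply (fact ereal_gap2[OF h2]) done
    next
      case False2: False
      then have Gn: "G < 0" using Gne by simp
      then have ab: "alpha_bar l u Z P J G = min (ereal (Z $ P) - l P) (u J - ereal (Z $ J)) / ereal \<bar>G\<bar>"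
        by (simp add: alpha_bar_def)
      have "0 < G * (xs $ P - Z' $ P)" using False by (simp add: not_le)
      then have "xs $ P - Z' $ P < 0" using Gn by (simp add: zero_less_mult_iff)
      then have "xs $ P < Z $ P - al * \<bar>G\<bar>" using ZP Gn by simp
      then have "ereal (xs $ P) < ereal (Z $ P - al * \<bar>G\<bar>)" by simp
      then have h1: "l P < ereal (Z $ P - al * \<bar>G\<bar>)" using feas(1) by (rule le_less_trans[rotated])
      have h2: "ereal (Z $ J + al * \<bar>G\<bar>) < u J" using jint2 ZJ Gn by simp
      show ?thesis
        apply (rule stepE[of "\<bar>G\<bar>" "A k i" "\<delta>^m" "al" "\<Delta> k i" "ereal (Z $ P) - l P" "u J - ereal (Z $ J)"])
        using Gne apply simp
        apply (fact Apos) apply (fact q(1)) apply (fact q(2))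
        apply (simp add: al_def m(1)) apply (simp add: DeltaG ab)
        apply (fact ereal_gap2[OF h1]) apply (fact ereal_gap1[OF h2]) done
    qed
    define L where "L = Lc P J"
    have Lpos: "L > 0" using Lc_pos PJ by (simp add: L_def)
    have LLmax: "L \<le> Lmax" unfolding Lmax_def L_def
      by (rule Max_ge) auto
    have alpos: "al > 0" using key q m(1) by (simp add: al_def)
    have lower: "Al \<le> al \<or> 2 * \<delta> * (1 - \<gamma>) / L < al"
    proof (cases m)
      case 0
      then show ?thesis using key m(1) Ak by (simp add: al_def)
    next
      case (Suc m')
      define t where "t = \<delta> ^ m' * \<Delta> k i"
      have tpos: "t > 0" using key \<delta> by (simp add: t_def)
      have alt: "al = \<delta> * t" using m(1) Suc by (simp add: al_def t_def)
      have na: "\<not> armijo k i t" using m(3) Suc by (simp add: t_def)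
      have gd: "grad Z \<bullet> d k i = - (G*G)"
        by (simp add: dkv v_def inner_diff_right inner_axis G_def g_def Z_def P_def J_def power2_eq_square algebra_simps)
      have lip: "grad (Z + r *\<^sub>R d k i) \<bullet> d k i - grad Z \<bullet> d k i \<le> (L * (G*G)) * r" if r: "r \<ge> 0" for r
      proof -
        have e1: "Z + r *\<^sub>R d k i = Z + (r * G) *\<^sub>R v" by (simp add: dkv)
        have ll: "\<bar>grad (Z + (r*G) *\<^sub>R v) \<bullet> v - grad (Z + 0 *\<^sub>R v) \<bullet> v\<bar> \<le> L * \<bar>r*G - 0\<bar>"
          using Lc_lip[rule_format, OF PJ, of Z "r*G" 0] unfolding L_def v_def by simp
        have "grad (Z + r *\<^sub>R d k i) \<bullet> d k i - grad Z \<bullet> d k i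
              = G * (grad (Z + (r*G) *\<^sub>R v) \<bullet> v - grad (Z + 0 *\<^sub>R v) \<bullet> v)"
          by (simp add: e1 dkv algebra_simps)
        also have "\<dots> \<le> \<bar>G\<bar> * \<bar>grad (Z + (r*G) *\<^sub>R v) \<bullet> v - grad (Z + 0 *\<^sub>R v) \<bullet> v\<bar>"
          by (metis abs_ge_self abs_mult)
        also have "\<dots> \<le> \<bar>G\<bar> * (L * \<bar>r*G - 0\<bar>)"
          by (rule mult_left_mono[OF ll]) simp
        also have "\<dots> = (L * (G*G)) * r" using r by (simp add: abs_mult power2_eq_square)
        finally show ?thesis .
      qed
      have desc: "f (Z + t *\<^sub>R d k i) \<le> f Z + t * (grad Z \<bullet> d k i) + (L * (G*G))/2 * t^2"
        by (rule descent[OF grad lip]) (use tpos in auto)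
      have "f (Z + t *\<^sub>R d k i) > f Z + \<gamma> * t * (grad Z \<bullet> d k i)"
        using na by (simp add: armijo_def Z_def)
      with desc gd have "\<gamma> * t * (- (G*G)) < t * (- (G*G)) + (L * (G*G))/2 * t^2" by simp
      then have "(t * (G*G)) * (1 - \<gamma>) < (t * (G*G)) * (L * t / 2)"
        by (simp add: algebra_simps power2_eq_square)
      moreover have "t * (G*G) > 0" using tpos Gne by (auto simp add: zero_less_mult_iff)
      ultimately have "1 - \<gamma> < L * t / 2" by (metis mult_less_cancel_left_pos)
      then have "2 * (1 - \<gamma>) / L < t" using Lpos by (simp add: field_simps)
      then have "\<delta> * (2 * (1 - \<gamma>) / L) < \<delta> * t" using \<delta> by (intro mult_strict_left_mono) auto
      moreover have "\<delta> * (2 * (1 - \<gamma>) / L) = 2 * \<delta> * (1 - \<gamma>) / L" by simp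
      ultimately have "2 * \<delta> * (1 - \<gamma>) / L < al" using alt by metis
      then show ?thesis by blast
    qed
    have Cal: "1 \<le> C * al"
      using lower
    proof
      assume "Al \<le> al"
      have "1 = (1/Al) * Al" using Al by simp
      also have "\<dots> \<le> C * al" using \<open>Al \<le> al\<close> Al Cpos
        by (intro mult_mono) (auto simp: C_def less_imp_le)
      finally show ?thesis .
    next
      assume h: "2 * \<delta> * (1 - \<gamma>) / L < al"
      have pd: "2 * \<delta> * (1 - \<gamma>) > 0" using \<delta> \<gamma> by simp
      have "1 = (L / (2 * \<delta> * (1 - \<gamma>))) * (2 * \<delta> * (1 - \<gamma>) / L)" using pd Lpos \<delta> \<gamma> by simp
      also have "\<dots> \<le> (Lmax / (2 * \<delta> * (1 - \<gamma>))) * al"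
        using h pd Lpos LLmax by (intro mult_mono) (auto simp: divide_right_mono)
      also have "\<dots> \<le> C * al" using alpos by (intro mult_right_mono) (auto simp: C_def)
      finally show ?thesis .
    qed
    have "G * (xs $ P - Z' $ P) \<le> \<bar>G\<bar> * \<bar>xs $ P - Z' $ P\<bar>"
      by (metis abs_ge_self abs_mult)
    also have "\<dots> \<le> (C * al) * (\<bar>G\<bar> * \<bar>xs $ P - Z' $ P\<bar>)"
      using mult_right_mono[OF Cal, of "\<bar>G\<bar> * \<bar>xs $ P - Z' $ P\<bar>"] by simp
    also have "\<dots> = C * \<bar>Z' $ P - Z $ P\<bar> * \<bar>xs $ P - Z' $ P\<bar>"
      using alpos by (simp add: ZP abs_mult)
    finally show ?thesis unfolding P_def Z_def Z'_def G_def C_def .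
  qed
qed

end
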